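(* For every integer $n\ge1$, the set $\mathcal{GL}^n$ of $n\times n$ Gram-Lorentz matrices is convex if and only if $n\le 2$.
   Context: The $m$-dimensional Lorentz cone is $\mathcal{L}_m:=\{(c,x)\in\mathbb{R}\times\mathbb{R}^{m-1}: c\ge\|x\|\}$ (Euclidean norm). An $n\times n$ real symmetric matrix $X$ is Gram-Lorentz if there exist $m\ge1$ and vectors $\ell_1,\dots,\ell_n\in\mathcal{L}_m$ with $X_{ij}=\langle\ell_i,\ell_j\rangle$ for all $i,j$; $\mathcal{GL}^n$ denotes the set of such matrices. *)

theory Defs
  imports "HOL-Analysis.Analysis"
begin

text \<open>The m-dimensional Lorentz cone. Vectors of R^m are represented as functions
  nat => real, of which only the coordinates 0..m-1 are relevant; coordinate 0 is c and
  coordinates 1..m-1 form x.\<close>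
definition lorentz_cone :: "nat \<Rightarrow> (nat \<Rightarrow> real) set" where
  "lorentz_cone m = {v. sqrt (\<Sum>k\<in>{1..<m}. (v k)^2) \<le> v 0}"

definition gram_lorentz :: "(real^'n^'n) set" where
  "gram_lorentz = {X. \<exists>m\<ge>1. \<exists>l :: 'n \<Rightarrow> nat \<Rightarrow> real.
      (\<forall>i. l i \<in> lorentz_cone m) \<and>
      (\<forall>i j. X $ i $ j = (\<Sum>k<m. l i k * l j k))}"

end

theory Submission
  imports Defs
begin

definition Sdnn :: "(real^'n^'n) set" where
  "Sdnn = {X. \<forall>i j. X$i$j = X$j$i \<and> 0 \<le> X$i$j \<and> (X$i$j)^2 \<le> X$i$i * X$j$j}"

lemma cone_sq:
  assumes "v \<in> lorentz_cone m"
  shows "0 \<le> v 0" "(\<Sum>k\<in>{1..<m}. (v k)^2) \<le> (v 0)^2"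
proof -
  have h: "sqrt (\<Sum>k\<in>{1..<m}. (v k)^2) \<le> v 0" using assms by (simp add: lorentz_cone_def)
  show "0 \<le> v 0" using h by (meson order_trans real_sqrt_ge_zero sum_nonneg zero_le_power2)
  show "(\<Sum>k\<in>{1..<m}. (v k)^2) \<le> (v 0)^2"
    using h by (metis real_sqrt_le_iff real_sqrt_pow2_iff sum_nonneg zero_le_power2 power2_le_imp_le real_sqrt_ge_zero sqrt_le_D)
qed

lemma sum_split0:
  fixes m :: nat
  assumes "1 \<le> m"
  shows "(\<Sum>k<m. f k) = f 0 + (\<Sum>k\<in>{1..<m}. f k)"
proof -
  have "{..<m} = insert 0 {1..<m}" using assms by (auto simp: not_le less_one)
  then show ?thesis by simp
qed

lemma cone_inner_nonneg:
  assumes "u \<in> lorentz_cone m" "v \<in> lorentz_cone m" "1 \<le> m"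
  shows "0 \<le> (\<Sum>k<m. u k * v k)"
proof -
  let ?U = "\<Sum>k\<in>{1..<m}. (u k)^2" and ?V = "\<Sum>k\<in>{1..<m}. (v k)^2"
  and ?P = "\<Sum>k\<in>{1..<m}. u k * v k"
  have cs: "?P^2 \<le> ?U * ?V" by (rule Cauchy_Schwarz_ineq_sum)
  have u: "0 \<le> u 0" "?U \<le> (u 0)^2" using cone_sq[OF assms(1)] by auto
  have v: "0 \<le> v 0" "?V \<le> (v 0)^2" using cone_sq[OF assms(2)] by auto
  have U0: "0 \<le> ?U" "0 \<le> ?V" by (auto intro: sum_nonneg)
  have "?U * ?V \<le> (u 0)^2 * (v 0)^2" using u v U0 by (simp add: mult_mono)
  then have "?P^2 \<le> (u 0 * v 0)^2" using cs by (simp add: power_mult_distrib)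
  then have "\<bar>?P\<bar> \<le> u 0 * v 0" using u v
    by (metis abs_of_nonneg mult_nonneg_nonneg power2_le_imp_le power2_abs abs_ge_zero)
  then show ?thesis using sum_split0[OF assms(3), of "\<lambda>k. u k * v k"] by linarith
qed

lemma GL_sub_S: "gram_lorentz \<subseteq> (Sdnn :: (real^'n^'n) set)"
proof
  fix X :: "real^'n^'n" assume "X \<in> gram_lorentz"
  then obtain m l where m: "m \<ge> 1" and l: "\<forall>i. l i \<in> lorentz_cone m"
    and X: "\<forall>i j. X $ i $ j = (\<Sum>k<m. l i k * l j k)" by (auto simp: gram_lorentz_def)
  show "X \<in> Sdnn" unfolding Sdnn_def
  proof (intro CollectI allI conjI)
    fix i j
    show "X$i$j = X$j$i" using X by (simp add: mult.commute)
    show "0 \<le> X$i$j" using X cone_inner_nonneg[OF _ _ m] l by simp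
    show "(X$i$j)^2 \<le> X$i$i * X$j$j" using X Cauchy_Schwarz_ineq_sum[of "l i" "l j" "{..<m}"]
      by (simp add: power2_eq_square)
  qed
qed

lemma convex_S: "convex (Sdnn :: (real^'n^'n) set)"
proof (rule convexI)
  fix X Y :: "real^'n^'n" and s t :: real
  assume X: "X \<in> Sdnn" and Y: "Y \<in> Sdnn" and s: "0 \<le> s" and t: "0 \<le> t" and st: "s + t = 1"
  show "s *\<^sub>R X + t *\<^sub>R Y \<in> Sdnn" unfolding Sdnn_def
  proof (intro CollectI allI conjI)
    fix i j
    have Xs: "X$i$j = X$j$i" "0 \<le> X$i$j" "(X$i$j)^2 \<le> X$i$i * X$j$j" "0 \<le> X$i$i" "0 \<le> X$j$j"
      using X unfolding Sdnn_def mem_Collect_eq by (blast, blast, blast, metis, metis)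
    have Ys: "Y$i$j = Y$j$i" "0 \<le> Y$i$j" "(Y$i$j)^2 \<le> Y$i$i * Y$j$j" "0 \<le> Y$i$i" "0 \<le> Y$j$j"
      using Y unfolding Sdnn_def mem_Collect_eq by (blast, blast, blast, metis, metis)
    show "(s *\<^sub>R X + t *\<^sub>R Y)$i$j = (s *\<^sub>R X + t *\<^sub>R Y)$j$i" using Xs Ys by simp
    show "0 \<le> (s *\<^sub>R X + t *\<^sub>R Y)$i$j" using Xs Ys s t by simp
    define a1 where "a1 = X$i$i" define b1 where "b1 = X$j$j" define c1 where "c1 = X$i$j"
    define a2 where "a2 = Y$i$i" define b2 where "b2 = Y$j$j" define c2 where "c2 = Y$i$j"
    have h1: "c1^2 \<le> a1*b1" "0 \<le> c1" "0 \<le> a1" "0 \<le> b1" using Xs unfolding a1_def b1_def c1_def by auto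
    have h2: "c2^2 \<le> a2*b2" "0 \<le> c2" "0 \<le> a2" "0 \<le> b2" using Ys unfolding a2_def b2_def c2_def by auto
    have "(2*c1*c2)^2 \<le> 4*(a1*b2)*(a2*b1)"
    proof -
      have "(c1*c2)^2 = c1^2 * c2^2" by (simp add: power_mult_distrib)
      also have "\<dots> \<le> (a1*b1)*(a2*b2)" using h1 h2 by (simp add: mult_mono)
      finally show ?thesis by (simp add: power_mult_distrib algebra_simps)
    qed
    also have "\<dots> \<le> (a1*b2 + a2*b1)^2"
      using sum_squares_ge_zero[of "a1*b2 - a2*b1" 0] by (simp add: power2_eq_square algebra_simps)
    finally have cross: "2*c1*c2 \<le> a1*b2 + a2*b1"
      using h1 h2 by (meson power2_le_imp_le add_nonneg_nonneg mult_nonneg_nonneg)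
    have "(s*c1 + t*c2)^2 = s^2*c1^2 + s*t*(2*c1*c2) + t^2*c2^2" by (simp add: power2_eq_square algebra_simps)
    also have "\<dots> \<le> s^2*(a1*b1) + s*t*(a1*b2 + a2*b1) + t^2*(a2*b2)"
      using h1 h2 cross s t by (intro add_mono mult_left_mono) auto
    also have "\<dots> = (s*a1 + t*a2)*(s*b1+t*b2)" by (simp add: power2_eq_square algebra_simps)
    finally show "((s *\<^sub>R X + t *\<^sub>R Y)$i$j)^2 \<le> (s *\<^sub>R X + t *\<^sub>R Y)$i$i * (s *\<^sub>R X + t *\<^sub>R Y)$j$j"
      by (simp add: a1_def b1_def c1_def a2_def b2_def c2_def)
  qed
qed

lemma two_vecs:
  fixes a b c :: real
  assumes "0 \<le> a" "0 \<le> b" "0 \<le> c" "c^2 \<le> a*b"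
  shows "\<exists>u v. u \<in> lorentz_cone 2 \<and> v \<in> lorentz_cone 2 \<and>
     (\<Sum>k<2. u k * u k) = a \<and> (\<Sum>k<2. v k * v k) = b \<and> (\<Sum>k<2. u k * v k) = c"
proof -
  define r where "r = sqrt (a*b)"
  define q where "q = c / r"
  have r0: "0 \<le> r" using assms by (simp add: r_def)
  have cr: "c \<le> r" unfolding r_def using assms by (metis real_le_rsqrt)
  have q0: "0 \<le> q" "q \<le> 1" using r0 cr assms by (auto simp: q_def divide_simps)
  have rq: "r * q = c"
  proof (cases "r = 0")
    case True then show ?thesis using cr assms by simp
  next
    case False then show ?thesis by (simp add: q_def)
  qed
  define u where "u = (\<lambda>k::nat. if k = 0 then sqrt (a*(1+q)/2) else sqrt (a*(1-q)/2))"
  define v where "v = (\<lambda>k::nat. if k = 0 then sqrt (b*(1+q)/2) else - sqrt (b*(1-q)/2))"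
  have s2: "\<And>f :: nat \<Rightarrow> real. (\<Sum>k<2. f k) = f 0 + f 1" by (simp add: numeral_2_eq_2)
  have s1: "\<And>f :: nat \<Rightarrow> real. (\<Sum>k\<in>{1..<2}. f k) = f 1" by (simp add: numeral_2_eq_2)
  have ap: "0 \<le> a*(1+q)/2" "0 \<le> a*(1-q)/2" "0 \<le> b*(1+q)/2" "0 \<le> b*(1-q)/2"
    using assms q0 by auto
  have al: "a*(1-q)/2 \<le> a*(1+q)/2" "b*(1-q)/2 \<le> b*(1+q)/2"
    using assms q0 by (auto intro!: divide_right_mono mult_left_mono)
  have "sqrt ((u 1)^2) \<le> u 0" unfolding u_def using al ap by simp
  then have "u \<in> lorentz_cone 2" unfolding lorentz_cone_def s1 by simp
  moreover have "sqrt ((v 1)^2) \<le> v 0" unfolding v_def using al ap by simp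
  then have "v \<in> lorentz_cone 2" unfolding lorentz_cone_def s1 by simp
  moreover have "(\<Sum>k<2. u k * u k) = a"
  proof -
    have "(\<Sum>k<2. u k * u k) = a*(1+q)/2 + a*(1-q)/2" unfolding s2 u_def using ap by simp
    also have "\<dots> = a" by (simp add: field_simps)
    finally show ?thesis .
  qed
  moreover have "(\<Sum>k<2. v k * v k) = b"
  proof -
    have "(\<Sum>k<2. v k * v k) = b*(1+q)/2 + b*(1-q)/2" unfolding s2 v_def using ap by simp
    also have "\<dots> = b" by (simp add: field_simps)
    finally show ?thesis .
  qed
  moreover have "(\<Sum>k<2. u k * v k) = c"
  proof -
    have "(\<Sum>k<2. u k * v k) = sqrt (a*(1+q)/2) * sqrt (b*(1+q)/2) - sqrt (a*(1-q)/2) * sqrt (b*(1-q)/2)"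
      unfolding u_def v_def s2 by simp
    also have "\<dots> = sqrt ((a*b) * ((1+q)/2)^2) - sqrt ((a*b) * ((1-q)/2)^2)"
      by (simp only: real_sqrt_mult[symmetric]) (simp add: power2_eq_square algebra_simps)
    also have "\<dots> = r * ((1+q)/2) - r * ((1-q)/2)"
      using q0 by (simp only: real_sqrt_mult r_def real_sqrt_abs) simp
    also have "\<dots> = r * q" by (simp add: field_simps)
    finally show ?thesis using rq by simp
  qed
  ultimately show ?thesis by blast
qed

lemma S_sub_GL:
  assumes "CARD('n) \<le> 2"
  shows "(Sdnn :: (real^'n^'n) set) \<subseteq> gram_lorentz"
proof
  fix X :: "real^'n^'n" assume XS: "X \<in> Sdnn"
  have Xp: "\<And>i j. X$i$j = X$j$i" "\<And>i j. 0 \<le> X$i$j" "\<And>i j. (X$i$j)^2 \<le> X$i$i * X$j$j"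
    using XS unfolding Sdnn_def by auto
  obtain i0 :: 'n where True by simp
  define i1 where "i1 = (if \<exists>j. j \<noteq> i0 then (SOME j. j \<noteq> i0) else i0)"
  have all: "i = i0 \<or> i = i1" for i
  proof (rule ccontr)
    assume n: "\<not> (i = i0 \<or> i = i1)"
    then have ex: "\<exists>j. j \<noteq> i0" by blast
    then have "i1 \<noteq> i0" unfolding i1_def by (metis (mono_tags, lifting) someI_ex)
    then have "card {i0, i1, i} = 3" using n by auto
    moreover have "card {i0, i1, i} \<le> CARD('n)" by (rule card_mono) auto
    ultimately show False using assms by simp
  qed
  obtain u v where uv: "u \<in> lorentz_cone 2" "v \<in> lorentz_cone 2"
    "(\<Sum>k<2. u k * u k) = X$i0$i0" "(\<Sum>k<2. v k * v k) = X$i1$i1" "(\<Sum>k<2. u k * v k) = X$i0$i1"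
    using two_vecs[of "X$i0$i0" "X$i1$i1" "X$i0$i1"] Xp by blast
  define l where "l = (\<lambda>i. if i = i0 then u else v)"
  have "\<forall>i. l i \<in> lorentz_cone 2" using uv by (simp add: l_def)
  moreover have "\<forall>i j. X $ i $ j = (\<Sum>k<2. l i k * l j k)"
  proof (intro allI)
    fix i j
    show "X $ i $ j = (\<Sum>k<2. l i k * l j k)"
      using all[of i] all[of j] uv Xp(1)[of i0 i1]
      by (cases "i = i0"; cases "j = i0") (auto simp: l_def mult.commute)
  qed
  ultimately show "X \<in> gram_lorentz" unfolding gram_lorentz_def
    by (intro CollectI exI[of _ 2]) auto
qed

lemma no_three:
  fixes a b d :: "nat \<Rightarrow> real"
  assumes m: "1 \<le> m" and cone: "a \<in> lorentz_cone m" "b \<in> lorentz_cone m" "d \<in> lorentz_cone m"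
  and n: "(\<Sum>k<m. a k * a k) = 1" "(\<Sum>k<m. b k * b k) = 1" "(\<Sum>k<m. d k * d k) = 1"
  and o: "(\<Sum>k<m. a k * b k) = 0" "(\<Sum>k<m. a k * d k) = 0" "(\<Sum>k<m. b k * d k) = 0"
  shows False
proof -
  let ?I = "{1..<m}"
  define A where "A = (\<Sum>k\<in>?I. a k * a k)"
  define B where "B = (\<Sum>k\<in>?I. b k * b k)"
  define D where "D = (\<Sum>k\<in>?I. d k * d k)"
  define P where "P = (\<Sum>k\<in>?I. a k * b k)"
  define Q where "Q = (\<Sum>k\<in>?I. a k * d k)"
  define R where "R = (\<Sum>k\<in>?I. b k * d k)"
  have e: "a 0 * a 0 + A = 1" "b 0 * b 0 + B = 1" "d 0 * d 0 + D = 1"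
     "a 0 * b 0 + P = 0" "a 0 * d 0 + Q = 0" "b 0 * d 0 + R = 0"
    using n o sum_split0[OF m] unfolding A_def B_def D_def P_def Q_def R_def by metis+
  have ca: "0 \<le> a 0" "A \<le> (a 0)^2" using cone_sq[OF cone(1)] unfolding A_def by (auto simp: power2_eq_square)
  have cb: "0 \<le> b 0" "B \<le> (b 0)^2" using cone_sq[OF cone(2)] unfolding B_def by (auto simp: power2_eq_square)
  have cd: "0 \<le> d 0" "D \<le> (d 0)^2" using cone_sq[OF cone(3)] unfolding D_def by (auto simp: power2_eq_square)
  have "0 \<le> (\<Sum>k\<in>?I. (a k + b k + d k)^2)" by (simp add: sum_nonneg)
  also have "\<dots> = A + B + D + 2*P + 2*Q + 2*R"
    unfolding A_def B_def D_def P_def Q_def R_def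
    by (simp add: power2_eq_square algebra_simps sum.distrib sum_distrib_left)
  finally have main: "0 \<le> A + B + D + 2*P + 2*Q + 2*R" .
  have a2: "1/2 \<le> a 0 * a 0" "1/2 \<le> b 0 * b 0" "1/2 \<le> d 0 * d 0"
    using e ca cb cd by (auto simp: power2_eq_square)
  have pr: "1/2 \<le> x * y" if "0 \<le> x" "0 \<le> y" "1/2 \<le> x*x" "1/2 \<le> y*y" for x y :: real
  proof -
    have "(1/2)*(1/2) \<le> (x*x)*(y*y)" using that by (intro mult_mono) auto
    then have "(1/2)^2 \<le> (x*y)^2" by (simp add: power2_eq_square algebra_simps)
    then show ?thesis using that by (meson power2_le_imp_le mult_nonneg_nonneg)
  qed
  have "1/2 \<le> a 0 * b 0" "1/2 \<le> a 0 * d 0" "1/2 \<le> b 0 * d 0"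
    using pr ca cb cd a2 by auto
  then show False using main e a2 by linarith
qed

lemma diagE_GL:
  fixes j :: "'n::finite"
  shows "((\<chi> i i'. if i = j \<and> i' = j then 3 else 0) :: real^'n^'n) \<in> gram_lorentz"
proof -
  define l where "l = (\<lambda>i (k::nat). if i = j then sqrt 3 else (0::real))"
  have "\<forall>i. l i \<in> lorentz_cone 1" by (simp add: lorentz_cone_def l_def)
  moreover have "\<forall>i i'. ((\<chi> i i'. if i = j \<and> i' = j then 3 else 0) :: real^'n^'n) $ i $ i' =
     (\<Sum>k<1. l i k * l i' k)" by (simp add: l_def)
  ultimately show ?thesis unfolding gram_lorentz_def mem_Collect_eq
    using order_refl by blast
qed

theorem lemma4p6:
  shows "convex (gram_lorentz :: (real^'n^'n) set) \<longleftrightarrow> CARD('n) \<le> 2"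
proof
  assume le: "CARD('n) \<le> 2"
  have "(gram_lorentz :: (real^'n^'n) set) = Sdnn" using GL_sub_S S_sub_GL[OF le] by blast
  then show "convex (gram_lorentz :: (real^'n^'n) set)" using convex_S by simp
next
  assume cv: "convex (gram_lorentz :: (real^'n^'n) set)"
  show "CARD('n) \<le> 2"
  proof (rule ccontr)
    assume nle: "\<not> CARD('n) \<le> 2"
    obtain p :: 'n where True by simp
    have "\<exists>q::'n. q \<noteq> p"
    proof (rule ccontr)
      assume "\<not> ?thesis" then have "(UNIV::'n set) = {p}" by auto
      then have "CARD('n) = card {p}" by metis
      then show False using nle by simp
    qed
    then obtain q :: 'n where pq: "q \<noteq> p" by blast
    have "\<exists>r::'n. r \<noteq> p \<and> r \<noteq> q"
    proof (rule ccontr)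
      assume "\<not> ?thesis" then have "(UNIV::'n set) = {p, q}" by auto
      then have "CARD('n) = card {p, q}" by metis
      then have "CARD('n) \<le> 2" using pq by simp
      then show False using nle by simp
    qed
    then obtain r :: 'n where pr: "r \<noteq> p" "r \<noteq> q" by blast
    define E where "E = (\<lambda>j. ((\<chi> i i'. if i = j \<and> i' = j then 3 else 0) :: real^'n^'n))"
    have EG: "E j \<in> gram_lorentz" for j unfolding E_def by (rule diagE_GL)
    have F: "(1/2) *\<^sub>R E p + (1/2) *\<^sub>R E q \<in> gram_lorentz"
      using convexD[OF cv EG EG] by simp
    have G: "(2/3) *\<^sub>R ((1/2) *\<^sub>R E p + (1/2) *\<^sub>R E q) + (1/3) *\<^sub>R E r \<in> gram_lorentz"
      using convexD[OF cv F EG] by simp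
    then obtain m l where m: "m \<ge> 1" and l: "\<forall>i. l i \<in> lorentz_cone m"
      and X: "\<forall>i j. ((2/3) *\<^sub>R ((1/2) *\<^sub>R E p + (1/2) *\<^sub>R E q) + (1/3) *\<^sub>R E r) $ i $ j
                = (\<Sum>k<m. l i k * l j k)"
      unfolding gram_lorentz_def by blast
    have Xe: "(\<Sum>k<m. l i k * l j k) = (if i = p \<and> j = p then 1 else 0) + (if i = q \<and> j = q then 1 else 0)
       + (if i = r \<and> j = r then 1 else 0)" for i j
      using X[rule_format, of i j] unfolding E_def by auto
    show False
      using no_three[OF m l[rule_format, of p] l[rule_format, of q] l[rule_format, of r]]
        Xe[of p p] Xe[of q q] Xe[of r r] Xe[of p q] Xe[of p r] Xe[of q r] pq pr by auto
  qed
qed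

end
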